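(* Let $q$ be a prime power, $n\ge k\ge d\ge0$ integers, and $V_1,\dots,V_\ell$ subspaces of $\mathbb{F}_q^n$, each of dimension at most $k$. The following are equivalent: (1) there is a generic kernel pattern $(T_1,\dots,T_k)$ consisting solely of copies of $V_1,\dots,V_\ell$ and an additional $d$ copies of $\{0\}$; (2) there exist integers $\delta_1,\dots,\delta_\ell\ge0$ with $\sum_{i=1}^\ell\delta_i=k-d$ such that $\dim\big(\bigcap_{i\in\Omega}V_i\big)\le k-\sum_{i\in\Omega}\delta_i$ for every nonempty $\Omega\subseteq[\ell]$; (3) for every partition $P_1\sqcup\cdots\sqcup P_s=[\ell]$ into nonempty parts, $\sum_{i=1}^s\dim\big(\bigcap_{j\in P_i}V_j\big)\le(s-1)k+d$.
   Context: A generic kernel pattern is a $k$-tuple $(T_1,\dots,T_k)$ of subspaces of $\mathbb{F}_q^n$ with $\dim(\bigcap_{i\in\Omega}T_i)\le k-|\Omega|$ for all nonempty $\Omega\subseteq[k]$. *)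

theory Defs
  imports "HOL-Analysis.Analysis" "HOL-Library.Disjoint_Sets"
begin

text \<open>Vectors of F^n are modelled as 'a ^ 'n with 'a a finite field and CARD('n) = n.
  A k-tuple (T_1,...,T_k) is a function T indexed by {..<k}.\<close>

definition generic_kernel_pattern :: "nat \<Rightarrow> (nat \<Rightarrow> ('a::field ^ 'n) set) \<Rightarrow> bool" where
  "generic_kernel_pattern k T \<longleftrightarrow>
     (\<forall>i<k. vec.subspace (T i)) \<and>
     (\<forall>\<Omega>. \<Omega> \<noteq> {} \<and> \<Omega> \<subseteq> {..<k} \<longrightarrow>
        vec.dim (\<Inter>i\<in>\<Omega>. T i) \<le> k - card \<Omega>)"

definition copies_pattern ::
  "nat \<Rightarrow> nat \<Rightarrow> (nat \<Rightarrow> ('a::field ^ 'n) set) \<Rightarrow> nat \<Rightarrow> (nat \<Rightarrow> ('a ^ 'n) set) \<Rightarrow> bool" where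
  "copies_pattern k d V l T \<longleftrightarrow>
     (\<exists>Z \<sigma>. Z \<subseteq> {..<k} \<and> card Z = d \<and>
        (\<forall>j\<in>Z. T j = {0}) \<and>
        (\<forall>j\<in>{..<k} - Z. \<sigma> j < l \<and> T j = V (\<sigma> j)))"

end

theory Submission
  imports Defs
begin

lemma comb_tight_union:
  fixes g :: "nat set \<Rightarrow> nat" and \<delta> :: "nat \<Rightarrow> nat"
  assumes super: "\<And>A B. A \<subseteq> {..<l} \<Longrightarrow> B \<subseteq> {..<l} \<Longrightarrow> A \<inter> B \<noteq> {} \<Longrightarrow>
        g A + g B \<le> g (A \<union> B) + g (A \<inter> B)"
    and feas: "\<forall>\<Omega>. \<Omega> \<noteq> {} \<and> \<Omega> \<subseteq> {..<l} \<longrightarrow> int (g \<Omega>) \<le> int k - int (\<Sum>i\<in>\<Omega>. \<delta> i)"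
    and A: "A \<noteq> {}" "A \<subseteq> {..<l}" "int (g A) = int k - int (\<Sum>i\<in>A. \<delta> i)"
    and B: "B \<noteq> {}" "B \<subseteq> {..<l}" "int (g B) = int k - int (\<Sum>i\<in>B. \<delta> i)"
    and AB: "A \<inter> B \<noteq> {}"
  shows "A \<union> B \<noteq> {} \<and> A \<union> B \<subseteq> {..<l} \<and> int (g (A \<union> B)) = int k - int (\<Sum>i\<in>A \<union> B. \<delta> i)"
proof -
  have fin: "finite A" "finite B" using A B finite_subset by blast+
  have s: "(\<Sum>i\<in>A \<union> B. \<delta> i) + (\<Sum>i\<in>A \<inter> B. \<delta> i) = (\<Sum>i\<in>A. \<delta> i) + (\<Sum>i\<in>B. \<delta> i)"
    using sum.union_inter[OF fin] by simp
  have f1: "int (g (A \<union> B)) \<le> int k - int (\<Sum>i\<in>A \<union> B. \<delta> i)"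
    using feas[rule_format, of "A \<union> B"] A B by blast
  have ABs: "A \<inter> B \<subseteq> {..<l}" using A by blast
  have f2: "int (g (A \<inter> B)) \<le> int k - int (\<Sum>i\<in>A \<inter> B. \<delta> i)" using feas[rule_format, OF conjI[OF AB ABs]] .
  have sp: "g A + g B \<le> g (A \<union> B) + g (A \<inter> B)" using super A B AB by blast
  have "int (g (A \<union> B)) = int k - int (\<Sum>i\<in>A \<union> B. \<delta> i)"
    using f1 f2 sp A(3) B(3) s by linarith
  then show ?thesis using A B by auto
qed

lemma comb_main:
  fixes g :: "nat set \<Rightarrow> nat" and k d l :: nat
  assumes bound: "\<forall>\<Omega>. \<Omega> \<noteq> {} \<and> \<Omega> \<subseteq> {..<l} \<longrightarrow> g \<Omega> \<le> k"
    and super: "\<And>A B. A \<subseteq> {..<l} \<Longrightarrow> B \<subseteq> {..<l} \<Longrightarrow> A \<inter> B \<noteq> {} \<Longrightarrow>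
        g A + g B \<le> g (A \<union> B) + g (A \<inter> B)"
    and part: "\<forall>P. partition_on {..<l} P \<longrightarrow>
        int (\<Sum>B\<in>P. g B) \<le> (int (card P) - 1) * int k + int d"
  shows "m \<le> k - d \<Longrightarrow> \<exists>\<delta>::nat \<Rightarrow> nat. (\<Sum>i<l. \<delta> i) = m \<and>
     (\<forall>\<Omega>. \<Omega> \<noteq> {} \<and> \<Omega> \<subseteq> {..<l} \<longrightarrow> int (g \<Omega>) \<le> int k - int (\<Sum>i\<in>\<Omega>. \<delta> i))"
proof (induction m)
  case 0
  show ?case by (rule exI[of _ "\<lambda>_. 0"]) (use bound in auto)
next
  case (Suc m)
  then obtain \<delta> :: "nat \<Rightarrow> nat" where sd: "(\<Sum>i<l. \<delta> i) = m"
    and feas: "\<forall>\<Omega>. \<Omega> \<noteq> {} \<and> \<Omega> \<subseteq> {..<l} \<longrightarrow> int (g \<Omega>) \<le> int k - int (\<Sum>i\<in>\<Omega>. \<delta> i)"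
    by auto
  define tight where "tight \<Omega> \<longleftrightarrow> \<Omega> \<noteq> {} \<and> \<Omega> \<subseteq> {..<l} \<and> int (g \<Omega>) = int k - int (\<Sum>i\<in>\<Omega>. \<delta> i)" for \<Omega>
  have tu: "tight (A \<union> B)" if "tight A" "tight B" "A \<inter> B \<noteq> {}" for A B
    using comb_tight_union[OF super feas, of A B] that unfolding tight_def by blast
  show ?case
  proof (cases "\<exists>i<l. \<forall>\<Omega>. \<Omega> \<noteq> {} \<and> \<Omega> \<subseteq> {..<l} \<longrightarrow>
      int (g \<Omega>) \<le> int k - int (\<Sum>j\<in>\<Omega>. \<delta> j + (if j = i then 1 else 0))")
    case True
    then obtain i where i: "i < l" and f: "\<forall>\<Omega>. \<Omega> \<noteq> {} \<and> \<Omega> \<subseteq> {..<l} \<longrightarrow>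
      int (g \<Omega>) \<le> int k - int (\<Sum>j\<in>\<Omega>. \<delta> j + (if j = i then 1 else 0))" by blast
    have "(\<Sum>j<l. \<delta> j + (if j = i then 1 else 0)) = Suc m"
      using i sd by (simp add: sum.distrib)
    then show ?thesis using f by blast
  next
    case False
    have ex: "\<exists>S. tight S \<and> i \<in> S" if i: "i < l" for i
    proof -
      from False i obtain \<Omega> where O: "\<Omega> \<noteq> {}" "\<Omega> \<subseteq> {..<l}" and
        lt: "\<not> int (g \<Omega>) \<le> int k - int (\<Sum>j\<in>\<Omega>. \<delta> j + (if j = i then 1 else 0))" by blast
      have finO: "finite \<Omega>" using O finite_subset by blast
      have e: "(\<Sum>j\<in>\<Omega>. \<delta> j + (if j = i then 1 else 0)) = (\<Sum>j\<in>\<Omega>. \<delta> j) + (if i \<in> \<Omega> then 1 else 0)"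
        using finO by (simp add: sum.distrib)
      have fO: "int (g \<Omega>) \<le> int k - int (\<Sum>j\<in>\<Omega>. \<delta> j)" using feas O by blast
      have "i \<in> \<Omega>" using lt fO e by (cases "i \<in> \<Omega>") auto
      moreover have "tight \<Omega>" unfolding tight_def using O lt fO e \<open>i \<in> \<Omega>\<close> by auto
      ultimately show ?thesis by blast
    qed
    have exM: "\<exists>S. (tight S \<and> i \<in> S) \<and> (\<forall>T. tight T \<and> i \<in> T \<longrightarrow> card T \<le> card S)"
      if i: "i < l" for i
    proof -
      obtain S where "tight S \<and> i \<in> S" using ex[OF i] by blast
      moreover have "\<forall>T. tight T \<and> i \<in> T \<longrightarrow> card T < Suc l"
        unfolding tight_def by (metis card_lessThan card_mono finite_lessThan less_Suc_eq_le)
      ultimately show ?thesis using ex_has_greatest_nat[of "\<lambda>S. tight S \<and> i \<in> S" S card "Suc l"]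
        by blast
    qed
    then have "\<forall>i\<in>{..<l}. \<exists>S. (tight S \<and> i \<in> S) \<and> (\<forall>T. tight T \<and> i \<in> T \<longrightarrow> card T \<le> card S)"
      by blast
    then obtain M where M: "\<And>i. i < l \<Longrightarrow> tight (M i) \<and> i \<in> M i"
      and Mmax: "\<And>i T. i < l \<Longrightarrow> tight T \<Longrightarrow> i \<in> T \<Longrightarrow> card T \<le> card (M i)"
      by (metis lessThan_iff bchoice)
    have sub: "T \<subseteq> M i" if "i < l" "tight T" "i \<in> T" for i T
    proof -
      have t: "tight (T \<union> M i)" using tu[of T "M i"] M[OF that(1)] that by blast
      have fin: "finite (T \<union> M i)" using t unfolding tight_def using finite_subset by blast
      have "card (T \<union> M i) \<le> card (M i)" using Mmax[OF that(1) t] that(3) by blast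
      then have "T \<union> M i = M i" using card_subset_eq[OF fin, of "M i"]
        by (metis Un_upper2 card_mono antisym fin)
      then show ?thesis by blast
    qed
    define P where "P = M ` {..<l}"
    have Msub: "M i \<subseteq> {..<l}" if "i < l" for i using M[OF that] unfolding tight_def by blast
    have disj: "M i = M j" if "i < l" "j < l" "M i \<inter> M j \<noteq> {}" for i j
    proof -
      have t: "tight (M i \<union> M j)" using tu M that by blast
      show ?thesis using sub[OF that(1) t] sub[OF that(2) t] M that by blast
    qed
    have pP: "partition_on {..<l} P"
      unfolding partition_on_def disjoint_def P_def
    proof (intro conjI)
      show "\<Union> (M ` {..<l}) = {..<l}" using Msub M by blast
      show "{} \<notin> M ` {..<l}" using M by blast
      show "\<forall>A\<in>M ` {..<l}. \<forall>B\<in>M ` {..<l}. A \<noteq> B \<longrightarrow> A \<inter> B = {}" using disj by blast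
    qed
    have finP: "finite P" unfolding P_def by simp
    have tP: "tight B" if "B \<in> P" for B using that M unfolding P_def by blast
    have finB: "\<forall>B\<in>P. finite B" using tP unfolding tight_def using finite_subset by blast
    have dP: "\<forall>A\<in>P. \<forall>B\<in>P. A \<noteq> B \<longrightarrow> A \<inter> B = {}" using disj unfolding P_def by blast
    have UP: "\<Union>P = {..<l}" using pP unfolding partition_on_def by blast
    have "(\<Sum>B\<in>P. (\<Sum>i\<in>B. \<delta> i)) = (\<Sum>i<l. \<delta> i)"
      using sum.Union_disjoint[OF finB dP, of \<delta>] UP by simp
    then have s1: "(\<Sum>B\<in>P. int (\<Sum>i\<in>B. \<delta> i)) = int m" using sd by (metis of_nat_sum)
    have "int (\<Sum>B\<in>P. g B) = (\<Sum>B\<in>P. int (g B))" by simp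
    also have "\<dots> = (\<Sum>B\<in>P. int k - int (\<Sum>i\<in>B. \<delta> i))"
      using tP unfolding tight_def by (intro sum.cong) auto
    also have "\<dots> = int (card P) * int k - int m"
      using s1 by (simp add: sum_subtractf)
    finally have "int (card P) * int k - int m \<le> (int (card P) - 1) * int k + int d"
      using part pP by metis
    then have "int k \<le> int m + int d" by (simp add: algebra_simps)
    then show ?thesis using Suc.prems by linarith
  qed
qed


lemma dim_super:
  fixes V :: "nat \<Rightarrow> ('a::field ^ 'n) set"
  assumes sV: "\<forall>i<l. vec.subspace (V i)"
    and A: "A \<subseteq> {..<l}" and B: "B \<subseteq> {..<l}" and AB: "A \<inter> B \<noteq> {}"
  shows "vec.dim (\<Inter>i\<in>A. V i) + vec.dim (\<Inter>i\<in>B. V i)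
         \<le> vec.dim (\<Inter>i\<in>A \<union> B. V i) + vec.dim (\<Inter>i\<in>A \<inter> B. V i)"
proof -
  define X where "X = (\<Inter>i\<in>A. V i)"
  define Y where "Y = (\<Inter>i\<in>B. V i)"
  have sX: "vec.subspace X" unfolding X_def using sV A by (intro vec.subspace_Inter) auto
  have sY: "vec.subspace Y" unfolding Y_def using sV B by (intro vec.subspace_Inter) auto
  have e: "(\<Inter>i\<in>A \<union> B. V i) = X \<inter> Y" unfolding X_def Y_def by blast
  have "{x + y |x y. x \<in> X \<and> y \<in> Y} \<subseteq> (\<Inter>i\<in>A \<inter> B. V i)"
  proof
    fix z assume "z \<in> {x + y |x y. x \<in> X \<and> y \<in> Y}"
    then obtain x y where z: "z = x + y" "x \<in> X" "y \<in> Y" by blast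
    show "z \<in> (\<Inter>i\<in>A \<inter> B. V i)"
    proof
      fix i assume i: "i \<in> A \<inter> B"
      have "x \<in> V i" "y \<in> V i" using z i unfolding X_def Y_def by auto
      moreover have "vec.subspace (V i)" using sV i A by auto
      ultimately show "z \<in> V i" using z vec.subspace_add by blast
    qed
  qed
  then have "vec.dim {x + y |x y. x \<in> X \<and> y \<in> Y} \<le> vec.dim (\<Inter>i\<in>A \<inter> B. V i)"
    by (rule vec.dim_subset)
  moreover have "vec.dim (\<Inter>i\<in>A \<union> B. V i) = vec.dim (X \<inter> Y)" using e by simp
  moreover have "vec.dim X = vec.dim (\<Inter>i\<in>A. V i)" "vec.dim Y = vec.dim (\<Inter>i\<in>B. V i)"
    by (simp_all add: X_def Y_def)
  ultimately show ?thesis using vec.dim_sums_Int[OF sX sY] by linarith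
qed

lemma three_two:
  fixes V :: "nat \<Rightarrow> ('a::field ^ 'n) set" and l k d :: nat
  assumes "d \<le> k"
    and hV: "\<forall>i<l. vec.subspace (V i) \<and> vec.dim (V i) \<le> k"
    and part: "\<forall>P. partition_on {..<l} P \<longrightarrow>
             int (\<Sum>B\<in>P. vec.dim (\<Inter>j\<in>B. V j)) \<le> (int (card P) - 1) * int k + int d"
  shows "\<exists>\<delta>::nat \<Rightarrow> nat. (\<Sum>i<l. \<delta> i) = k - d \<and>
             (\<forall>\<Omega>. \<Omega> \<noteq> {} \<and> \<Omega> \<subseteq> {..<l} \<longrightarrow>
                int (vec.dim (\<Inter>i\<in>\<Omega>. V i)) \<le> int k - int (\<Sum>i\<in>\<Omega>. \<delta> i))"
proof (rule comb_main[where g = "\<lambda>\<Omega>. vec.dim (\<Inter>i\<in>\<Omega>. V i)"])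
  show "\<forall>\<Omega>. \<Omega> \<noteq> {} \<and> \<Omega> \<subseteq> {..<l} \<longrightarrow> vec.dim (\<Inter>i\<in>\<Omega>. V i) \<le> k"
  proof (intro allI impI)
    fix \<Omega> :: "nat set" assume O: "\<Omega> \<noteq> {} \<and> \<Omega> \<subseteq> {..<l}"
    then obtain i where i: "i \<in> \<Omega>" by blast
    have "vec.dim (\<Inter>i\<in>\<Omega>. V i) \<le> vec.dim (V i)" using i by (intro vec.dim_subset) blast
    also have "\<dots> \<le> k" using hV O i by auto
    finally show "vec.dim (\<Inter>i\<in>\<Omega>. V i) \<le> k" .
  qed
  show "\<And>A B. A \<subseteq> {..<l} \<Longrightarrow> B \<subseteq> {..<l} \<Longrightarrow> A \<inter> B \<noteq> {} \<Longrightarrow>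
      vec.dim (\<Inter>i\<in>A. V i) + vec.dim (\<Inter>i\<in>B. V i)
         \<le> vec.dim (\<Inter>i\<in>A \<union> B. V i) + vec.dim (\<Inter>i\<in>A \<inter> B. V i)"
    using dim_super hV by blast
  show "\<forall>P. partition_on {..<l} P \<longrightarrow>
             int (\<Sum>B\<in>P. vec.dim (\<Inter>j\<in>B. V j)) \<le> (int (card P) - 1) * int k + int d"
    by (rule part)
qed simp

lemma two_three:
  fixes V :: "nat \<Rightarrow> ('a::field ^ 'n) set" and l k d :: nat
  assumes "d \<le> k"
    and sd: "(\<Sum>i<l. \<delta> i) = k - d"
    and feas: "\<forall>\<Omega>. \<Omega> \<noteq> {} \<and> \<Omega> \<subseteq> {..<l} \<longrightarrow>
                int (vec.dim (\<Inter>i\<in>\<Omega>. V i)) \<le> int k - int (\<Sum>i\<in>\<Omega>. \<delta> i)"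
    and pP: "partition_on {..<l} P"
  shows "int (\<Sum>B\<in>P. vec.dim (\<Inter>j\<in>B. V j)) \<le> (int (card P) - 1) * int k + int d"
proof -
  have UP: "\<Union>P = {..<l}" and dP0: "disjoint P" and ne: "{} \<notin> P"
    using pP unfolding partition_on_def by auto
  have finB: "\<forall>B\<in>P. finite B" using UP by (metis Union_upper finite_lessThan finite_subset)
  have finP: "finite P" using UP by (metis finite_UnionD finite_lessThan)
  have dP: "\<forall>A\<in>P. \<forall>B\<in>P. A \<noteq> B \<longrightarrow> A \<inter> B = {}" using dP0 unfolding disjoint_def by blast
  have "(\<Sum>B\<in>P. (\<Sum>i\<in>B. \<delta> i)) = (\<Sum>i<l. \<delta> i)"
    using sum.Union_disjoint[OF finB dP, of \<delta>] UP by simp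
  then have s1: "(\<Sum>B\<in>P. int (\<Sum>i\<in>B. \<delta> i)) = int k - int d" using sd assms(1) by (metis of_nat_sum of_nat_diff)
  have "int (\<Sum>B\<in>P. vec.dim (\<Inter>j\<in>B. V j)) = (\<Sum>B\<in>P. int (vec.dim (\<Inter>j\<in>B. V j)))" by simp
  also have "\<dots> \<le> (\<Sum>B\<in>P. int k - int (\<Sum>i\<in>B. \<delta> i))"
  proof (rule sum_mono)
    fix B assume "B \<in> P"
    then have "B \<noteq> {} \<and> B \<subseteq> {..<l}" using UP ne by blast
    then show "int (vec.dim (\<Inter>j\<in>B. V j)) \<le> int k - int (\<Sum>i\<in>B. \<delta> i)" using feas by blast
  qed
  also have "\<dots> = int (card P) * int k - (int k - int d)" using s1 by (simp add: sum_subtractf)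
  finally show ?thesis by (simp add: algebra_simps)
qed


lemma one_two:
  fixes V T :: "nat \<Rightarrow> ('a::field ^ 'n) set" and l k d :: nat
  assumes "d \<le> k"
    and hV: "\<forall>i<l. vec.subspace (V i) \<and> vec.dim (V i) \<le> k"
    and gk: "generic_kernel_pattern k T" and cp: "copies_pattern k d V l T"
  shows "\<exists>\<delta>::nat \<Rightarrow> nat. (\<Sum>i<l. \<delta> i) = k - d \<and>
             (\<forall>\<Omega>. \<Omega> \<noteq> {} \<and> \<Omega> \<subseteq> {..<l} \<longrightarrow>
                int (vec.dim (\<Inter>i\<in>\<Omega>. V i)) \<le> int k - int (\<Sum>i\<in>\<Omega>. \<delta> i))"
proof -
  obtain Z \<sigma> where H: "Z \<subseteq> {..<k} \<and> card Z = d \<and> (\<forall>j\<in>Z. T j = {0}) \<and>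
        (\<forall>j\<in>{..<k} - Z. \<sigma> j < l \<and> T j = V (\<sigma> j))"
    using cp unfolding copies_pattern_def by (elim exE) (rule that)
  have Z: "Z \<subseteq> {..<k}" "card Z = d" and S: "\<forall>j\<in>{..<k} - Z. \<sigma> j < l \<and> T j = V (\<sigma> j)"
    using H by simp_all
  define S where "S = {..<k} - Z"
  have finS: "finite S" unfolding S_def by simp
  have cS: "card S = k - d" unfolding S_def using Z by (simp add: card_Diff_subset finite_subset)
  define \<delta> where "\<delta> i = card {j\<in>S. \<sigma> j = i}" for i
  have grp: "(\<Sum>i\<in>I. \<delta> i) = card {j\<in>S. \<sigma> j \<in> I}" if "finite I" for I
  proof -
    have "(\<Sum>i\<in>I. \<delta> i) = (\<Sum>i\<in>I. (\<Sum>j\<in>{x\<in>{j\<in>S. \<sigma> j \<in> I}. \<sigma> x = i}. 1))"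
    proof (rule sum.cong[OF refl])
      fix i assume "i \<in> I"
      then have "{x\<in>{j\<in>S. \<sigma> j \<in> I}. \<sigma> x = i} = {j\<in>S. \<sigma> j = i}" by blast
      then show "\<delta> i = (\<Sum>j\<in>{x\<in>{j\<in>S. \<sigma> j \<in> I}. \<sigma> x = i}. 1)" unfolding \<delta>_def by simp
    qed
    also have "\<dots> = (\<Sum>j\<in>{j\<in>S. \<sigma> j \<in> I}. 1)"
      by (rule sum.group) (use finS that in auto)
    finally show ?thesis by simp
  qed
  have "(\<Sum>i<l. \<delta> i) = card {j\<in>S. \<sigma> j \<in> {..<l}}" using grp[of "{..<l}"] by simp
  also have "{j\<in>S. \<sigma> j \<in> {..<l}} = S" using S unfolding S_def by auto
  finally have sd: "(\<Sum>i<l. \<delta> i) = k - d" using cS by simp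
  have feas: "int (vec.dim (\<Inter>i\<in>\<Omega>. V i)) \<le> int k - int (\<Sum>i\<in>\<Omega>. \<delta> i)"
    if O: "\<Omega> \<noteq> {}" "\<Omega> \<subseteq> {..<l}" for \<Omega>
  proof -
    define J where "J = {j\<in>S. \<sigma> j \<in> \<Omega>}"
    have finO: "finite \<Omega>" using O finite_subset by blast
    have sJ: "(\<Sum>i\<in>\<Omega>. \<delta> i) = card J" unfolding J_def using grp[OF finO] .
    have Jk: "J \<subseteq> {..<k}" unfolding J_def S_def by auto
    have cJ: "card J \<le> k" using card_mono[OF _ Jk] by simp
    show ?thesis
    proof (cases "J = {}")
      case True
      obtain i where i: "i \<in> \<Omega>" using O by blast
      have "vec.dim (\<Inter>i\<in>\<Omega>. V i) \<le> vec.dim (V i)" using i by (intro vec.dim_subset) blast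
      also have "\<dots> \<le> k" using hV O i by auto
      finally show ?thesis using sJ True by simp
    next
      case False
      have "vec.dim (\<Inter>j\<in>J. T j) \<le> k - card J"
        using gk False Jk unfolding generic_kernel_pattern_def by blast
      moreover have sub: "(\<Inter>i\<in>\<Omega>. V i) \<subseteq> (\<Inter>j\<in>J. T j)"
        using S unfolding J_def S_def by auto
      ultimately have "vec.dim (\<Inter>i\<in>\<Omega>. V i) \<le> k - card J"
        using vec.dim_subset[OF sub] by linarith
      then show ?thesis using sJ cJ by linarith
    qed
  qed
  show ?thesis using sd feas by blast
qed

lemma two_one:
  fixes V :: "nat \<Rightarrow> ('a::field ^ 'n) set" and l k d :: nat
  assumes "d \<le> k"
    and hV: "\<forall>i<l. vec.subspace (V i) \<and> vec.dim (V i) \<le> k"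
    and sd: "(\<Sum>i<l. \<delta> i) = k - d"
    and feas: "\<forall>\<Omega>. \<Omega> \<noteq> {} \<and> \<Omega> \<subseteq> {..<l} \<longrightarrow>
                int (vec.dim (\<Inter>i\<in>\<Omega>. V i)) \<le> int k - int (\<Sum>i\<in>\<Omega>. \<delta> i)"
  shows "\<exists>T. generic_kernel_pattern k T \<and> copies_pattern k d V l T"
proof -
  define Sg where "Sg = (SIGMA i:{..<l}. {..<\<delta> i})"
  have "card Sg = k - d" unfolding Sg_def using sd by simp
  moreover have "card {d..<k} = k - d" by simp
  ultimately obtain h where h: "bij_betw h {d..<k} Sg"
    using finite_same_card_bij[of "{d..<k}" Sg] unfolding Sg_def by auto
  define \<sigma> where "\<sigma> j = fst (h j)" for j
  define T where "T j = (if j < d then {0} else V (\<sigma> j))" for j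
  have hS: "h j \<in> Sg" if "d \<le> j" "j < k" for j using h that unfolding bij_betw_def by auto
  have \<sigma>l: "\<sigma> j < l" if "d \<le> j" "j < k" for j using hS[OF that] unfolding Sg_def \<sigma>_def by auto
  have cp: "copies_pattern k d V l T"
    unfolding copies_pattern_def
    apply (rule exI[of _ "{..<d}"], rule exI[of _ \<sigma>])
    using assms(1) \<sigma>l by (auto simp: T_def)
  have gk: "generic_kernel_pattern k T"
    unfolding generic_kernel_pattern_def
  proof (intro conjI allI impI)
    fix i assume "i < k"
    then show "vec.subspace (T i)" using hV \<sigma>l by (auto simp: T_def)
  next
    fix \<Omega> :: "nat set" assume O: "\<Omega> \<noteq> {} \<and> \<Omega> \<subseteq> {..<k}"
    have finO: "finite \<Omega>" using O finite_subset by blast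
    have cO: "card \<Omega> \<le> k" using O card_mono[of "{..<k}" \<Omega>] by simp
    show "vec.dim (\<Inter>i\<in>\<Omega>. T i) \<le> k - card \<Omega>"
    proof (cases "\<exists>j\<in>\<Omega>. j < d")
      case True
      then obtain j where "j \<in> \<Omega>" "j < d" by blast
      then have "(\<Inter>i\<in>\<Omega>. T i) \<subseteq> {0}" by (auto simp: T_def)
      then have "vec.dim (\<Inter>i\<in>\<Omega>. T i) \<le> vec.dim {0::'a^'n}" by (rule vec.dim_subset)
      moreover have "vec.dim {0::'a^'n} = 0" by (metis vec.dim_span vec.span_empty vec.dim_empty)
      ultimately have "vec.dim (\<Inter>i\<in>\<Omega>. T i) = 0" by simp
      then show ?thesis by linarith
    next
      case False
      then have Od: "\<Omega> \<subseteq> {d..<k}" using O by (auto simp: subset_eq not_less)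
      define I where "I = \<sigma> ` \<Omega>"
      have Il: "I \<subseteq> {..<l}" "I \<noteq> {}" using Od \<sigma>l O unfolding I_def by auto
      have finI: "finite I" unfolding I_def using finO by simp
      have eq: "(\<Inter>i\<in>\<Omega>. T i) = (\<Inter>i\<in>I. V i)" unfolding I_def T_def using False by auto
      have "card \<Omega> = card (h ` \<Omega>)"
        using h Od by (metis bij_betw_def card_image inj_on_subset)
      also have "\<dots> \<le> card (SIGMA i:I. {..<\<delta> i})"
      proof (rule card_mono)
        show "finite (SIGMA i:I. {..<\<delta> i})" using finI by simp
        show "h ` \<Omega> \<subseteq> (SIGMA i:I. {..<\<delta> i})"
        proof
          fix x assume "x \<in> h ` \<Omega>"
          then obtain j where j: "j \<in> \<Omega>" "x = h j" by blast
          have "h j \<in> Sg" using hS Od j by auto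
          then show "x \<in> (SIGMA i:I. {..<\<delta> i})"
            using j unfolding Sg_def I_def \<sigma>_def by (cases "h j") force
        qed
      qed
      also have "\<dots> = (\<Sum>i\<in>I. \<delta> i)" using finI by simp
      finally have cI: "card \<Omega> \<le> (\<Sum>i\<in>I. \<delta> i)" .
      have "int (vec.dim (\<Inter>i\<in>I. V i)) \<le> int k - int (\<Sum>i\<in>I. \<delta> i)" using feas Il by blast
      moreover have "vec.dim (\<Inter>i\<in>\<Omega>. T i) = vec.dim (\<Inter>i\<in>I. V i)" using eq by (rule arg_cong)
      ultimately show ?thesis using cI cO by linarith
    qed
  qed
  show ?thesis using gk cp by blast
qed

theorem mainTheorem16:
  fixes V :: "nat \<Rightarrow> ('a::field ^ 'n) set" and l k d :: nat
  assumes "finite (UNIV :: 'a set)"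
    and "k \<le> CARD('n)" and "d \<le> k"
    and "\<forall>i<l. vec.subspace (V i) \<and> vec.dim (V i) \<le> k"
  shows "((\<exists>T. generic_kernel_pattern k T \<and> copies_pattern k d V l T)
          \<longleftrightarrow>
          (\<exists>\<delta>::nat \<Rightarrow> nat. (\<Sum>i<l. \<delta> i) = k - d \<and>
             (\<forall>\<Omega>. \<Omega> \<noteq> {} \<and> \<Omega> \<subseteq> {..<l} \<longrightarrow>
                int (vec.dim (\<Inter>i\<in>\<Omega>. V i)) \<le> int k - int (\<Sum>i\<in>\<Omega>. \<delta> i))))
       \<and> ((\<exists>\<delta>::nat \<Rightarrow> nat. (\<Sum>i<l. \<delta> i) = k - d \<and>
             (\<forall>\<Omega>. \<Omega> \<noteq> {} \<and> \<Omega> \<subseteq> {..<l} \<longrightarrow>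
                int (vec.dim (\<Inter>i\<in>\<Omega>. V i)) \<le> int k - int (\<Sum>i\<in>\<Omega>. \<delta> i)))
          \<longleftrightarrow>
          (\<forall>P. partition_on {..<l} P \<longrightarrow>
             int (\<Sum>B\<in>P. vec.dim (\<Inter>j\<in>B. V j)) \<le> (int (card P) - 1) * int k + int d))"
proof (intro conjI iffI)
  assume "\<exists>T. generic_kernel_pattern k T \<and> copies_pattern k d V l T"
  then show "\<exists>\<delta>::nat \<Rightarrow> nat. (\<Sum>i<l. \<delta> i) = k - d \<and>
             (\<forall>\<Omega>. \<Omega> \<noteq> {} \<and> \<Omega> \<subseteq> {..<l} \<longrightarrow>
                int (vec.dim (\<Inter>i\<in>\<Omega>. V i)) \<le> int k - int (\<Sum>i\<in>\<Omega>. \<delta> i))"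
    using one_two[OF assms(3,4)] by blast
next
  assume "\<exists>\<delta>::nat \<Rightarrow> nat. (\<Sum>i<l. \<delta> i) = k - d \<and>
             (\<forall>\<Omega>. \<Omega> \<noteq> {} \<and> \<Omega> \<subseteq> {..<l} \<longrightarrow>
                int (vec.dim (\<Inter>i\<in>\<Omega>. V i)) \<le> int k - int (\<Sum>i\<in>\<Omega>. \<delta> i))"
  then show "\<exists>T. generic_kernel_pattern k T \<and> copies_pattern k d V l T"
    using two_one[OF assms(3,4)] by blast
next
  assume "\<exists>\<delta>::nat \<Rightarrow> nat. (\<Sum>i<l. \<delta> i) = k - d \<and>
             (\<forall>\<Omega>. \<Omega> \<noteq> {} \<and> \<Omega> \<subseteq> {..<l} \<longrightarrow>
                int (vec.dim (\<Inter>i\<in>\<Omega>. V i)) \<le> int k - int (\<Sum>i\<in>\<Omega>. \<delta> i))"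
  then show "\<forall>P. partition_on {..<l} P \<longrightarrow>
             int (\<Sum>B\<in>P. vec.dim (\<Inter>j\<in>B. V j)) \<le> (int (card P) - 1) * int k + int d"
    using two_three[OF assms(3)] by blast
next
  assume "\<forall>P. partition_on {..<l} P \<longrightarrow>
             int (\<Sum>B\<in>P. vec.dim (\<Inter>j\<in>B. V j)) \<le> (int (card P) - 1) * int k + int d"
  then show "\<exists>\<delta>::nat \<Rightarrow> nat. (\<Sum>i<l. \<delta> i) = k - d \<and>
             (\<forall>\<Omega>. \<Omega> \<noteq> {} \<and> \<Omega> \<subseteq> {..<l} \<longrightarrow>
                int (vec.dim (\<Inter>i\<in>\<Omega>. V i)) \<le> int k - int (\<Sum>i\<in>\<Omega>. \<delta> i))"
    using three_two[OF assms(3,4)] by blast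
qed

end
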